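(* Let $k\ge 2$. For every proper coloring of the gadget $A(k)$ using at most $2k-2$ colors, the gadget is exactly one of row-colorful and column-colorful (i.e., it is row-colorful or column-colorful, but not both).
   Context: The gadget $A(k)$ is the graph with node set $[k]\times[k]$ in which $(i,j)$ and $(i',j')$ are adjacent iff $i\ne i'$ and $j\ne j'$. For $i\in[k]$, the $i$-th row is $\{(i,j):j\in[k]\}$; for $j\in[k]$, the $j$-th column is $\{(i,j):i\in[k]\}$. Given a proper coloring of $A(k)$, a row (resp. column) is colorful if its $k$ nodes receive pairwise distinct colors; the gadget is row-colorful if it has a colorful row and column-colorful if it has a colorful column. *)

theory Defs
  imports Main
begin

text \<open>Gadget A(k): node set [k] x [k], rendered as {0..<k} x {0..<k}.
  (i,j) and (i',j') adjacent iff i ~= i' and j ~= j'.\<close>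

definition gadget_nodes :: "nat \<Rightarrow> (nat \<times> nat) set" where
  "gadget_nodes k = {0..<k} \<times> {0..<k}"

definition gadget_adj :: "nat \<Rightarrow> nat \<times> nat \<Rightarrow> nat \<times> nat \<Rightarrow> bool" where
  "gadget_adj k u v \<longleftrightarrow> u \<in> gadget_nodes k \<and> v \<in> gadget_nodes k
      \<and> fst u \<noteq> fst v \<and> snd u \<noteq> snd v"

definition proper_coloring :: "nat \<Rightarrow> (nat \<times> nat \<Rightarrow> 'c) \<Rightarrow> bool" where
  "proper_coloring k c \<longleftrightarrow> (\<forall>u v. gadget_adj k u v \<longrightarrow> c u \<noteq> c v)"

definition colorful_row :: "nat \<Rightarrow> (nat \<times> nat \<Rightarrow> 'c) \<Rightarrow> nat \<Rightarrow> bool" where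
  "colorful_row k c i \<longleftrightarrow> inj_on (\<lambda>j. c (i, j)) {0..<k}"

definition colorful_col :: "nat \<Rightarrow> (nat \<times> nat \<Rightarrow> 'c) \<Rightarrow> nat \<Rightarrow> bool" where
  "colorful_col k c j \<longleftrightarrow> inj_on (\<lambda>i. c (i, j)) {0..<k}"

definition row_colorful :: "nat \<Rightarrow> (nat \<times> nat \<Rightarrow> 'c) \<Rightarrow> bool" where
  "row_colorful k c \<longleftrightarrow> (\<exists>i\<in>{0..<k}. colorful_row k c i)"

definition column_colorful :: "nat \<Rightarrow> (nat \<times> nat \<Rightarrow> 'c) \<Rightarrow> bool" where
  "column_colorful k c \<longleftrightarrow> (\<exists>j\<in>{0..<k}. colorful_col k c j)"

end

theory Submission
  imports Defs
begin

lemma indep3: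
  assumes pc: "proper_coloring k c"
    and u: "u \<in> gadget_nodes k" and v: "v \<in> gadget_nodes k" and w: "w \<in> gadget_nodes k"
    and cuv: "c u = c v" and cuw: "c u = c w"
    and f: "fst u = fst v" and s: "snd u \<noteq> snd v"
  shows "fst w = fst u"
proof (rule ccontr)
  assume ne: "fst w \<noteq> fst u"
  have "snd w = snd u"
    using pc u w cuw ne unfolding proper_coloring_def gadget_adj_def by metis
  moreover have "snd w = snd v"
    using pc v w cuv cuw ne f unfolding proper_coloring_def gadget_adj_def by metis
  ultimately show False using s by simp
qed

lemma indep3':
  assumes pc: "proper_coloring k c"
    and u: "u \<in> gadget_nodes k" and v: "v \<in> gadget_nodes k" and w: "w \<in> gadget_nodes k"
    and cuv: "c u = c v" and cuw: "c u = c w"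
    and f: "snd u = snd v" and s: "fst u \<noteq> fst v"
  shows "snd w = snd u"
proof (rule ccontr)
  assume ne: "snd w \<noteq> snd u"
  have "fst w = fst u"
    using pc u w cuw ne unfolding proper_coloring_def gadget_adj_def by metis
  moreover have "fst w = fst v"
    using pc v w cuv cuw ne f unfolding proper_coloring_def gadget_adj_def by metis
  ultimately show False using s by simp
qed

theorem mainTheorem14:
  fixes k :: nat and c :: "nat \<times> nat \<Rightarrow> 'c"
  assumes "k \<ge> 2"
    and "proper_coloring k c"
    and "card (c ` gadget_nodes k) \<le> 2 * k - 2"
  shows "row_colorful k c \<noteq> column_colorful k c"
proof
  assume eq: "row_colorful k c = column_colorful k c"
  have fin: "finite (c ` gadget_nodes k)" unfolding gadget_nodes_def by simp
  show False
  proof (cases "row_colorful k c")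
    case True
    then obtain i where i: "i < k" "colorful_row k c i" unfolding row_colorful_def by auto
    from eq True obtain j where j: "j < k" "colorful_col k c j" unfolding column_colorful_def by auto
    define A where "A = (\<lambda>j. c (i, j)) ` {0..<k}"
    define B where "B = (\<lambda>i. c (i, j)) ` {0..<k}"
    have cA: "card A = k" using i unfolding A_def colorful_row_def by (simp add: card_image)
    have cB: "card B = k" using j unfolding B_def colorful_col_def by (simp add: card_image)
    have "A \<inter> B \<subseteq> {c (i, j)}"
    proof
      fix x assume "x \<in> A \<inter> B"
      then obtain j' i' where j': "j' < k" "x = c (i, j')" and i': "i' < k" "x = c (i', j)"
        unfolding A_def B_def by auto
      show "x \<in> {c (i, j)}"
      proof (cases "j' = j \<or> i' = i")
        case True then show ?thesis using j' i' by auto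
      next
        case False
        then have "gadget_adj k (i, j') (i', j)" using i j i' j'
          unfolding gadget_adj_def gadget_nodes_def by auto
        then have "c (i, j') \<noteq> c (i', j)" using assms(2) unfolding proper_coloring_def by blast
        then show ?thesis using j' i' by simp
      qed
    qed
    then have "card (A \<inter> B) \<le> 1"
      using card_mono[of "{c (i, j)}" "A \<inter> B"] by simp
    moreover have "card A + card B = card (A \<union> B) + card (A \<inter> B)"
      using card_Un_Int[of A B] unfolding A_def B_def by simp
    moreover have "A \<union> B \<subseteq> c ` gadget_nodes k"
      using i j unfolding A_def B_def gadget_nodes_def by auto
    then have "card (A \<union> B) \<le> card (c ` gadget_nodes k)" using fin card_mono by blast
    ultimately show False using cA cB assms(1,3) by linarith
  next
    case False
    with eq have nr: "\<forall>i\<in>{0..<k}. \<not> colorful_row k c i"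
      and nc: "\<forall>j\<in>{0..<k}. \<not> colorful_col k c j"
      unfolding row_colorful_def column_colorful_def by auto
    have "\<forall>i\<in>{0..<k}. \<exists>p. fst p < k \<and> snd p < k \<and> fst p \<noteq> snd p \<and> c (i, fst p) = c (i, snd p)"
    proof
      fix i assume "i \<in> {0..<k}"
      then have "\<not> inj_on (\<lambda>j. c (i, j)) {0..<k}" using nr unfolding colorful_row_def by blast
      then obtain a b where "a < k" "b < k" "a \<noteq> b" "c (i, a) = c (i, b)"
        unfolding inj_on_def by auto
      then show "\<exists>p. fst p < k \<and> snd p < k \<and> fst p \<noteq> snd p \<and> c (i, fst p) = c (i, snd p)"
        by (intro exI[of _ "(a,b)"]) auto
    qed
    then obtain R where R: "\<forall>i\<in>{0..<k}. fst (R i) < k \<and> snd (R i) < k \<and> fst (R i) \<noteq> snd (R i)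
        \<and> c (i, fst (R i)) = c (i, snd (R i))" by (metis bchoice)
    have "\<forall>j\<in>{0..<k}. \<exists>p. fst p < k \<and> snd p < k \<and> fst p \<noteq> snd p \<and> c (fst p, j) = c (snd p, j)"
    proof
      fix j assume "j \<in> {0..<k}"
      then have "\<not> inj_on (\<lambda>i. c (i, j)) {0..<k}" using nc unfolding colorful_col_def by blast
      then obtain a b where "a < k" "b < k" "a \<noteq> b" "c (a, j) = c (b, j)"
        unfolding inj_on_def by auto
      then show "\<exists>p. fst p < k \<and> snd p < k \<and> fst p \<noteq> snd p \<and> c (fst p, j) = c (snd p, j)"
        by (intro exI[of _ "(a,b)"]) auto
    qed
    then obtain S where S: "\<forall>j\<in>{0..<k}. fst (S j) < k \<and> snd (S j) < k \<and> fst (S j) \<noteq> snd (S j)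
        \<and> c (fst (S j), j) = c (snd (S j), j)" by (metis bchoice)
    define r where "r i = c (i, fst (R i))" for i
    define s where "s j = c (fst (S j), j)" for j
    have mem: "(a, b) \<in> gadget_nodes k" if "a < k" "b < k" for a b
      using that unfolding gadget_nodes_def by simp
    have injr: "inj_on r {0..<k}"
    proof (rule inj_onI)
      fix i i' assume ii: "i \<in> {0..<k}" "i' \<in> {0..<k}" "r i = r i'"
      from R ii have "fst (i', fst (R i')) = fst (i, fst (R i))"
        by (intro indep3[OF assms(2) mem mem mem, of i "fst (R i)" i "snd (R i)" i' "fst (R i')"])
          (auto simp: r_def)
      then show "i = i'" by simp
    qed
    have injs: "inj_on s {0..<k}"
    proof (rule inj_onI)
      fix j j' assume jj: "j \<in> {0..<k}" "j' \<in> {0..<k}" "s j = s j'"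
      from S jj have "snd (fst (S j'), j') = snd (fst (S j), j)"
        by (intro indep3'[OF assms(2) mem mem mem, of "fst (S j)" j "snd (S j)" j "fst (S j')" j'])
          (auto simp: s_def)
      then show "j = j'" by simp
    qed
    have disj: "r ` {0..<k} \<inter> s ` {0..<k} = {}"
    proof (rule ccontr)
      assume "r ` {0..<k} \<inter> s ` {0..<k} \<noteq> {}"
      then obtain i j where ij: "i < k" "j < k" "r i = s j" by auto
      have Ri: "fst (R i) < k" "snd (R i) < k" "fst (R i) \<noteq> snd (R i)" "c (i, fst (R i)) = c (i, snd (R i))"
        using R ij by auto
      have Sj: "fst (S j) < k" "snd (S j) < k" "fst (S j) \<noteq> snd (S j)" "c (fst (S j), j) = c (snd (S j), j)"
        using S ij by auto
      have "fst (fst (S j), j) = fst (i, fst (R i))"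
        using Ri Sj ij by (intro indep3[OF assms(2) mem mem mem, of i "fst (R i)" i "snd (R i)"])
          (auto simp: r_def s_def)
      moreover have "fst (snd (S j), j) = fst (i, fst (R i))"
        using Ri Sj ij by (intro indep3[OF assms(2) mem mem mem, of i "fst (R i)" i "snd (R i)"])
          (auto simp: r_def s_def)
      ultimately show False using Sj by simp
    qed
    have "card (r ` {0..<k} \<union> s ` {0..<k}) = 2 * k"
      using disj injr injs by (simp add: card_Un_disjoint card_image)
    moreover have "r ` {0..<k} \<union> s ` {0..<k} \<subseteq> c ` gadget_nodes k"
      using R S unfolding r_def s_def gadget_nodes_def by force
    then have "card (r ` {0..<k} \<union> s ` {0..<k}) \<le> card (c ` gadget_nodes k)"
      using fin card_mono by blast
    ultimately show False using assms(1,3) by linarith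
  qed
qed

end
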